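(* Let $(a_i)_{i\ge 1}$ be integers and let $f(x)=\prod_{i=1}^\infty (1+(-x)^i)^{a_i}\in 1+x\,\mathbb Z[[x]]$. Then $f(x)\,f(-x)\,f(x^2)$ is the square of an element of $1+x\,\mathbb Z[[x]]$ if and only if $a_{2i}\equiv 0 \pmod 2$ for all $i\ge 1$.
   Context: $\mathbb Z[[x]]$ denotes formal power series with integer coefficients; the infinite product converges $x$-adically, and $(1+(-x)^i)^{a_i}$ for negative $a_i$ means the inverse power series. *)

theory Defs
  imports "HOL-Computational_Algebra.Formal_Power_Series"
begin

definition fps_int_power :: "int fps \<Rightarrow> int \<Rightarrow> int fps" where
  "fps_int_power p k =
     (if 0 \<le> k then p ^ nat k else (THE q. p * q = 1) ^ nat (- k))"

end

theory Submission
  imports Defs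
begin

unbundle fps_syntax

definition fcong :: "nat \<Rightarrow> int fps \<Rightarrow> int fps \<Rightarrow> bool" where
  "fcong m p q \<longleftrightarrow> (\<forall>k<m. p $ k = q $ k)"

lemma fcong_refl: "fcong m p p" by (simp add: fcong_def)
lemma fcong_sym: "fcong m p q \<Longrightarrow> fcong m q p" by (simp add: fcong_def)
lemma fcong_trans: "fcong m p q \<Longrightarrow> fcong m q r \<Longrightarrow> fcong m p r" by (simp add: fcong_def)
lemma fcong_mono: "fcong m p q \<Longrightarrow> m' \<le> m \<Longrightarrow> fcong m' p q" by (simp add: fcong_def)

lemma fcong_mult: "fcong m a b \<Longrightarrow> fcong m c d \<Longrightarrow> fcong m (a * c) (b * d)"
  unfolding fcong_def fps_mult_nth
  by (auto intro!: sum.cong)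

lemma fcong_prod: "finite A \<Longrightarrow> (\<And>i. i \<in> A \<Longrightarrow> fcong m (f i) (g i)) \<Longrightarrow>
   fcong m (\<Prod>i\<in>A. f i) (\<Prod>i\<in>A. g i)"
  by (induction A rule: finite_induct) (auto intro: fcong_mult fcong_refl)

lemma fcong_power: "fcong m a b \<Longrightarrow> fcong m (a ^ n) (b ^ n)"
  by (induction n) (auto intro: fcong_mult fcong_refl)

lemma fcong_compose: "fcong m p q \<Longrightarrow> fcong m (p oo s) (q oo s)"
  unfolding fcong_def fps_compose_nth by (auto intro!: sum.cong)

lemma fcong_X: "1 \<le> t \<Longrightarrow> m \<le> t \<Longrightarrow> fcong m (1 + c * fps_X ^ t) 1"
  unfolding fcong_def by (auto simp: fps_X_power_mult_right_nth)

lemma inv_the: "(p :: int fps) * r = 1 \<Longrightarrow> (THE q. p * q = 1) = r"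
proof (rule the_equality)
  fix q assume "p * r = 1" "p * q = 1"
  then have "q = q * (p * r)" by simp
  also have "\<dots> = (p * q) * r" by (simp add: ac_simps)
  finally show "q = r" using \<open>p * q = 1\<close> by simp
qed

lemma has_inv: "(p :: int fps) $ 0 = 1 \<Longrightarrow> \<exists>r. p * r = 1"
  using fps_right_inverse[of p 1] by auto

lemma ipow_nonneg: "0 \<le> a \<Longrightarrow> fps_int_power p a = p ^ nat a"
  by (simp add: fps_int_power_def)

lemma ipow_neg: "p * r = 1 \<Longrightarrow> a < 0 \<Longrightarrow> fps_int_power p a = r ^ nat (- a)"
  by (simp add: fps_int_power_def inv_the)

lemma ipow_mult:
  assumes "p * r = 1" "q * s = 1"
  shows "fps_int_power (p * q) a = fps_int_power p a * fps_int_power q a"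
proof (cases "0 \<le> a")
  case True then show ?thesis by (simp add: ipow_nonneg power_mult_distrib)
next
  case False
  have "(p * q) * (r * s) = 1" using assms by (simp add: ac_simps)
  with False assms show ?thesis by (simp add: ipow_neg power_mult_distrib)
qed

lemma ipow_double: "fps_int_power p (2 * c) = (fps_int_power p c) ^ 2"
proof (cases "0 \<le> c")
  case True
  then have "nat (2 * c) = nat c * 2" by simp
  with True show ?thesis by (simp add: fps_int_power_def power_mult)
next
  case False
  then have "nat (- (2 * c)) = nat (- c) * 2" by simp
  with False show ?thesis by (simp add: fps_int_power_def power_mult)
qed

lemma ipow_double1:
  assumes "p * r = 1"
  shows "fps_int_power p (2 * c + 1) = (fps_int_power p c) ^ 2 * p"
proof (cases "0 \<le> c")
  case True
  then have "nat (2 * c + 1) = Suc (nat c * 2)" by simp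
  with True show ?thesis by (simp add: fps_int_power_def power_mult ac_simps)
next
  case False
  define d where "d = nat (- c) - 1"
  have c: "nat (- c) = Suc d" using False by (simp add: d_def)
  have c2: "nat (- (2 * c + 1)) = Suc (2 * d)" using False by (simp add: d_def)
  have "r ^ Suc (2 * d) = r ^ Suc (2 * d) * (r * p)" using assms by (simp add: ac_simps)
  also have "\<dots> = (r ^ Suc d) ^ 2 * p"
    by (simp add: power2_eq_square power_add[symmetric] ac_simps mult_2_right)
  finally show ?thesis using False assms c c2 by (simp add: ipow_neg)
qed

lemma ipow_compose:
  assumes "p * r = 1" "s $ 0 = 0"
  shows "fps_int_power p a oo s = fps_int_power (p oo s) a"
proof (cases "0 \<le> a")
  case True then show ?thesis using assms by (simp add: ipow_nonneg fps_compose_power)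
next
  case False
  have "(p oo s) * (r oo s) = 1"
    using assms by (simp add: fps_compose_mult_distrib[symmetric])
  with False assms show ?thesis by (simp add: ipow_neg fps_compose_power)
qed

lemma ipow_fcong:
  assumes "p * r = 1" "fcong m p 1"
  shows "fcong m (fps_int_power p a) 1"
proof (cases "0 \<le> a")
  case True then show ?thesis using fcong_power[OF assms(2)] by (simp add: ipow_nonneg)
next
  case False
  have "fcong m (p * r) (1 * r)" by (rule fcong_mult[OF assms(2) fcong_refl])
  then have "fcong m r 1" using assms(1) by (simp add: fcong_sym)
  from fcong_power[OF this] False assms show ?thesis by (simp add: ipow_neg)
qed

definition phi :: "int fps \<Rightarrow> int fps" where
  "phi p = p * (p oo - fps_X) * (p oo fps_X ^ 2)"

lemma phi_mult: "phi (p * q) = phi p * phi q"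
  unfolding phi_def by (simp add: fps_compose_mult_distrib ac_simps)

lemma phi_prod: "phi (\<Prod>i\<in>A. f i) = (\<Prod>i\<in>A. phi (f i))"
  by (induction A rule: infinite_finite_induct) (simp_all add: phi_mult phi_def[of 1])

lemma phi_fcong: "fcong m p q \<Longrightarrow> fcong m (phi p) (phi q)"
  unfolding phi_def by (intro fcong_mult fcong_compose) auto

lemma u_compose:
  assumes "(c :: int fps) $ 0 = 0"
  shows "(1 + (- fps_X) ^ i) oo c = 1 + (- c) ^ i"
  using assms by (simp add: fps_compose_add_distrib fps_compose_power[symmetric] fps_compose_uminus)

lemma inv1: "(p :: int fps) $ 0 = 1 \<Longrightarrow> p * (SOME r. p * r = 1) = 1"
  by (rule someI_ex[OF has_inv])

lemma ipow_mult': "p $ 0 = 1 \<Longrightarrow> q $ 0 = 1 \<Longrightarrow>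
  fps_int_power (p * q) a = fps_int_power p a * fps_int_power q a"
  by (rule ipow_mult[OF inv1 inv1])

lemma ipow_compose': "p $ 0 = 1 \<Longrightarrow> s $ 0 = 0 \<Longrightarrow>
  fps_int_power p a oo s = fps_int_power (p oo s) a"
  by (rule ipow_compose[OF inv1])

lemma ipow_double1': "p $ 0 = 1 \<Longrightarrow>
  fps_int_power p (2 * c + 1) = (fps_int_power p c) ^ 2 * p"
  by (rule ipow_double1[OF inv1])

lemma ipow_fcong': "p $ 0 = 1 \<Longrightarrow> fcong m p 1 \<Longrightarrow> fcong m (fps_int_power p a) 1"
  by (rule ipow_fcong[OF inv1])

definition SS :: "(nat \<Rightarrow> int) \<Rightarrow> nat \<Rightarrow> int fps" where
  "SS a i = (if odd i then fps_int_power (1 - fps_X ^ (2 * i)) (a i)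
             else fps_int_power (1 + fps_X ^ i) (a i) * fps_int_power (1 + fps_X ^ (2 * i)) (a i div 2))"

definition RR :: "(nat \<Rightarrow> int) \<Rightarrow> nat \<Rightarrow> int fps" where
  "RR a i = (if odd i then 1 else (1 + fps_X ^ (2 * i)) ^ nat (a i mod 2))"

lemma phi_factor:
  assumes "1 \<le> i"
  shows "phi (fps_int_power (1 + (- fps_X) ^ i) (a i)) = (SS a i) ^ 2 * RR a i"
proof -
  have c1: "(- fps_X :: int fps) $ 0 = 0" by simp
  have c2: "(fps_X ^ 2 :: int fps) $ 0 = 0" by simp
  have u0: "(1 + (- fps_X :: int fps) ^ i) $ 0 = 1" using assms by simp
  have "phi (fps_int_power (1 + (- fps_X) ^ i) (a i)) =
     fps_int_power (1 + (- fps_X) ^ i) (a i) * fps_int_power (1 + fps_X ^ i) (a i)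
      * fps_int_power (1 + (- (fps_X ^ 2)) ^ i) (a i)"
    unfolding phi_def ipow_compose'[OF u0 c1] ipow_compose'[OF u0 c2] u_compose[OF c1] u_compose[OF c2]
    by simp
  also have "\<dots> = (SS a i) ^ 2 * RR a i"
  proof (cases "odd i")
    case True
    have e1: "(- fps_X :: int fps) ^ i = - (fps_X ^ i)" using True by (simp add: power_minus_odd)
    have e2: "(- (fps_X ^ 2) :: int fps) ^ i = - (fps_X ^ (2 * i))" using True
      by (simp add: power_minus_odd power_mult)
    have e3: "(1 - fps_X ^ i) * (1 + fps_X ^ i) = (1 - fps_X ^ (2 * i) :: int fps)"
      by (simp add: algebra_simps power_mult power2_eq_square)
    have z: "(1 - fps_X ^ i :: int fps) $ 0 = 1" "(1 + fps_X ^ i :: int fps) $ 0 = 1"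
      using assms by auto
    show ?thesis using True
      by (simp add: e1 e2 ipow_mult'[OF z, symmetric] e3 SS_def RR_def) (simp add: power2_eq_square)
  next
    case False
    have e1: "(- fps_X :: int fps) ^ i = fps_X ^ i" using False by (simp add: power_minus_even)
    have e2: "(- (fps_X ^ 2) :: int fps) ^ i = fps_X ^ (2 * i)" using False
      by (simp add: power_minus_even power_mult)
    have z: "(1 + fps_X ^ (2 * i) :: int fps) $ 0 = 1" using assms by auto
    have r: "fps_int_power (1 + fps_X ^ (2 * i)) (a i) =
        (fps_int_power (1 + fps_X ^ (2 * i)) (a i div 2)) ^ 2 * (1 + fps_X ^ (2 * i)) ^ nat (a i mod 2)"
    proof (cases "a i mod 2 = 0")
      case True
      then have "a i = 2 * (a i div 2)" by presburger
      then have "fps_int_power (1 + fps_X ^ (2 * i)) (a i) = fps_int_power (1 + fps_X ^ (2 * i)) (2 * (a i div 2))"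
        by simp
      then show ?thesis using True by (simp add: ipow_double)
    next
      case F: False
      then have m: "a i mod 2 = 1" by presburger
      then have "a i = 2 * (a i div 2) + 1" by presburger
      then have "fps_int_power (1 + fps_X ^ (2 * i)) (a i) = fps_int_power (1 + fps_X ^ (2 * i)) (2 * (a i div 2) + 1)"
        by simp
      then show ?thesis using m by (simp add: ipow_double1'[OF z])
    qed
    show ?thesis using False
      by (simp add: e1 e2 r SS_def RR_def) (simp add: power2_eq_square ac_simps)
  qed
  finally show ?thesis .
qed

lemma fcong_Xp: "1 \<le> t \<Longrightarrow> m \<le> t \<Longrightarrow> fcong m (1 + fps_X ^ t) 1"
  by (auto simp: fcong_def)

lemma fcong_Xm: "1 \<le> t \<Longrightarrow> m \<le> t \<Longrightarrow> fcong m (1 - fps_X ^ t) 1"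
  by (auto simp: fcong_def)

lemma SS_fcong:
  assumes "1 \<le> i"
  shows "fcong i (SS a i) 1"
proof (cases "odd i")
  case True
  have "fcong i (fps_int_power (1 - fps_X ^ (2 * i)) (a i)) 1"
    using assms by (intro ipow_fcong' fcong_Xm) auto
  then show ?thesis using True by (simp add: SS_def)
next
  case False
  have "fcong i (fps_int_power (1 + fps_X ^ i) (a i) * fps_int_power (1 + fps_X ^ (2 * i)) (a i div 2)) (1 * 1)"
    using assms by (intro fcong_mult ipow_fcong' fcong_Xp) auto
  then show ?thesis using False by (simp add: SS_def)
qed

lemma sq_lemma:
  fixes k :: "int fps"
  assumes k0: "k $ 0 = 1" and m: "1 \<le> m" and z: "\<forall>l. 1 \<le> l \<and> l < m \<longrightarrow> k $ l = 0"
  shows "(k ^ 2) $ m = 2 * k $ m"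
proof -
  have "(k ^ 2) $ m = (\<Sum>l=0..m. k $ l * k $ (m - l))"
    by (simp add: power2_eq_square fps_mult_nth)
  also have "\<dots> = (\<Sum>l=0..m. (if l = 0 then k $ m else 0) + (if l = m then k $ m else 0))"
  proof (rule sum.cong)
    fix l assume l: "l \<in> {0..m}"
    show "k $ l * k $ (m - l) = (if l = 0 then k $ m else 0) + (if l = m then k $ m else 0)"
    proof (cases "l = 0")
      case True then show ?thesis using m k0 by simp
    next
      case False
      show ?thesis
      proof (cases "l = m")
        case True then show ?thesis using k0 m by simp
      next
        case F: False
        then show ?thesis using False l z by auto
      qed
    qed
  qed simp
  also have "\<dots> = 2 * k $ m"
    by (simp add: sum.distrib)
  finally show ?thesis .
qed

lemma no_sq:
  fixes k :: "int fps"
  assumes k0: "k $ 0 = 1" and N: "1 \<le> N" and c: "fcong (Suc N) (k ^ 2) (1 + fps_X ^ N)"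
  shows False
proof -
  have z: "1 \<le> j \<longrightarrow> j < N \<longrightarrow> k $ j = 0" for j
  proof (induction j rule: less_induct)
    case (less j)
    show ?case
    proof (intro impI)
      assume j: "1 \<le> j" "j < N"
      have "(k ^ 2) $ j = 2 * k $ j"
        using less j by (intro sq_lemma k0) auto
      moreover have "(k ^ 2) $ j = (1 + fps_X ^ N :: int fps) $ j"
        using c j unfolding fcong_def by auto
      ultimately show "k $ j = 0" using j by simp
    qed
  qed
  have "(k ^ 2) $ N = 2 * k $ N"
    using z N by (intro sq_lemma k0) auto
  moreover have "(k ^ 2) $ N = (1 + fps_X ^ N :: int fps) $ N"
    using c unfolding fcong_def by auto
  ultimately have "2 * k $ N = 1" using N by simp
  then show False by presburger
qed

lemma conv_fcong:
  assumes "(P :: nat \<Rightarrow> int fps) \<longlonglongrightarrow> f"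
  shows "\<exists>n0. \<forall>n\<ge>n0. fcong m (P n) f"
proof -
  have "\<forall>k. eventually (\<lambda>n. P n $ k = f $ k) sequentially"
    using assms tendsto_fps_iff by blast
  then have "eventually (\<lambda>n. \<forall>k\<in>{..<m}. P n $ k = f $ k) sequentially"
    by (intro eventually_ball_finite) auto
  then show ?thesis unfolding eventually_sequentially fcong_def by auto
qed

lemma phi_P:
  "phi (\<Prod>i\<in>{1..n}. fps_int_power (1 + (- fps_X) ^ i) (a i)) =
     (\<Prod>i\<in>{1..n}. SS a i) ^ 2 * (\<Prod>i\<in>{1..n}. RR a i)"
proof -
  have "phi (\<Prod>i\<in>{1..n}. fps_int_power (1 + (- fps_X) ^ i) (a i)) =
     (\<Prod>i\<in>{1..n}. (SS a i) ^ 2 * RR a i)"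
    unfolding phi_prod by (intro prod.cong refl phi_factor) auto
  also have "\<dots> = (\<Prod>i\<in>{1..n}. SS a i) ^ 2 * (\<Prod>i\<in>{1..n}. RR a i)"
    by (simp add: prod.distrib prod_power_distrib)
  finally show ?thesis .
qed

lemma G0: "fcong 1 (\<Prod>i\<in>{1..n}. SS a i) 1"
proof -
  have "fcong 1 (\<Prod>i\<in>{1..n}. SS a i) (\<Prod>i\<in>{1..n}. 1)"
    by (intro fcong_prod) (auto intro: fcong_mono[OF SS_fcong])
  then show ?thesis by simp
qed

theorem theorem4p1:
  fixes a :: "nat \<Rightarrow> int" and f :: "int fps"
  assumes "(\<lambda>n. \<Prod>i\<in>{1..n}. fps_int_power (1 + (- fps_X) ^ i) (a i)) \<longlonglongrightarrow> f"
  shows "(\<exists>g :: int fps. fps_nth g 0 = 1 \<and> f * (f oo (- fps_X)) * (f oo fps_X ^ 2) = g ^ 2)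
         \<longleftrightarrow> (\<forall>i\<ge>1. a (2 * i) mod 2 = 0)"
proof -
  define P where "P n = (\<Prod>i\<in>{1..n}. fps_int_power (1 + (- fps_X) ^ i) (a i))" for n
  define G where "G n = (\<Prod>i\<in>{1..n}. SS a i)" for n
  define R where "R n = (\<Prod>i\<in>{1..n}. RR a i)" for n
  have lim: "P \<longlonglongrightarrow> f" using assms unfolding P_def by simp
  have phiP: "phi (P n) = G n ^ 2 * R n" for n
    unfolding P_def G_def R_def by (rule phi_P)
  have ff: "f * (f oo (- fps_X)) * (f oo fps_X ^ 2) = phi f" by (simp add: phi_def)
  show ?thesis unfolding ff
  proof
    assume "\<exists>g. g $ 0 = 1 \<and> phi f = g ^ 2"
    then obtain g where g0: "g $ 0 = 1" and g: "phi f = g ^ 2" by blast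
    show "\<forall>i\<ge>1. a (2 * i) mod 2 = 0"
    proof (rule ccontr)
      assume "\<not> (\<forall>i\<ge>1. a (2 * i) mod 2 = 0)"
      then have ex: "\<exists>j. 1 \<le> j \<and> a (2 * j) mod 2 \<noteq> 0" by auto
      define j0 where "j0 = (LEAST j. 1 \<le> j \<and> a (2 * j) mod 2 \<noteq> 0)"
      have j0: "1 \<le> j0" "a (2 * j0) mod 2 \<noteq> 0"
        using LeastI_ex[OF ex] unfolding j0_def by auto
      have j0min: "a (2 * j) mod 2 = 0" if "1 \<le> j" "j < j0" for j
        using not_less_Least[of j "\<lambda>j. 1 \<le> j \<and> a (2 * j) mod 2 \<noteq> 0"] that
        unfolding j0_def by auto
      define N where "N = 4 * j0"
      obtain n0 where n0: "\<forall>n\<ge>n0. fcong (Suc N) (P n) f"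
        using conv_fcong[OF lim] by blast
      define n where "n = max n0 (2 * j0)"
      have Pn: "fcong (Suc N) (P n) f" using n0 by (simp add: n_def)
      have Rn: "fcong (Suc N) (R n) (1 + fps_X ^ N)"
      proof -
        have "fcong (Suc N) (R n) (\<Prod>i\<in>{1..n}. if i = 2 * j0 then 1 + fps_X ^ N else 1)"
          unfolding R_def
        proof (intro fcong_prod)
          fix i assume i: "i \<in> {1..n}"
          show "fcong (Suc N) (RR a i) (if i = 2 * j0 then 1 + fps_X ^ N else 1)"
          proof (cases "odd i")
            case True
            then have "i \<noteq> 2 * j0" by auto
            then show ?thesis using True by (simp add: RR_def fcong_refl)
          next
            case False
            then obtain j where ij: "i = 2 * j" by (auto elim: evenE)
            have j1: "1 \<le> j" using i ij by auto
            consider "j < j0" | "j = j0" | "j0 < j" by linarith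
            then show ?thesis
            proof cases
              case 1
              then have "a i mod 2 = 0" using j0min j1 ij by auto
              then show ?thesis using 1 ij by (simp add: RR_def fcong_refl)
            next
              case 2
              then have "a i mod 2 = 1" using j0 ij by presburger
              then show ?thesis using 2 ij by (simp add: RR_def fcong_refl N_def)
            next
              case 3
              have "fcong (Suc N) (1 + fps_X ^ (2 * i)) 1"
                using 3 ij by (intro fcong_Xp) (auto simp: N_def)
              from fcong_power[OF this, of "nat (a i mod 2)"]
              show ?thesis using 3 ij by (simp add: RR_def)
            qed
          qed
        qed simp
        also have "(\<Prod>i\<in>{1..n}. if i = 2 * j0 then 1 + fps_X ^ N else 1) = (1 + fps_X ^ N :: int fps)"
          using j0 by (simp add: n_def)
        finally show ?thesis .
      qed
      have "G n $ 0 = 1" using G0[of a n] unfolding G_def fcong_def by simp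
      then obtain Gi where Gi: "G n * Gi = 1" using has_inv by blast
      have "(G n * Gi) $ 0 = 1" using Gi by simp
      then have Gi0: "Gi $ 0 = 1" using \<open>G n $ 0 = 1\<close> by simp
      define k where "k = g * Gi"
      have k0: "k $ 0 = 1" using g0 Gi0 by (simp add: k_def)
      have "fcong (Suc N) (phi f * Gi ^ 2) (phi (P n) * Gi ^ 2)"
        by (intro fcong_mult fcong_refl fcong_sym[OF phi_fcong[OF Pn]])
      also have "phi (P n) * Gi ^ 2 = R n * (G n * Gi) ^ 2"
        by (simp add: phiP power_mult_distrib ac_simps)
      also have "\<dots> = R n" using Gi by simp
      finally have "fcong (Suc N) (k ^ 2) (R n)"
        by (simp add: k_def g power_mult_distrib)
      then have "fcong (Suc N) (k ^ 2) (1 + fps_X ^ N)"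
        using Rn by (rule fcong_trans)
      moreover have "1 \<le> N" using j0 by (simp add: N_def)
      ultimately show False using no_sq[OF k0] by blast
    qed
  next
    assume H: "\<forall>i\<ge>1. a (2 * i) mod 2 = 0"
    have RR1: "RR a i = 1" if "1 \<le> i" for i
    proof (cases "odd i")
      case True then show ?thesis by (simp add: RR_def)
    next
      case False
      then obtain j where ij: "i = 2 * j" by (auto elim: evenE)
      then have "1 \<le> j" using that by auto
      then have "a i mod 2 = 0" using H ij by auto
      then show ?thesis using False by (simp add: RR_def)
    qed
    have R1: "R n = 1" for n unfolding R_def by (simp add: RR1)
    have stab: "fcong (Suc k) (G k) (G n)" if "k \<le> n" for k n
      using that
    proof (induction n rule: dec_induct)
      case base then show ?case by (rule fcong_refl)
    next
      case (step n)
      have "fcong (Suc k) (G k * 1) (G n * SS a (Suc n))"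
        using step by (intro fcong_mult fcong_sym[OF fcong_mono[OF SS_fcong]]) auto
      moreover have "G (Suc n) = G n * SS a (Suc n)"
        unfolding G_def by (simp add: atLeastAtMostSuc_conv ac_simps)
      ultimately show ?case by simp
    qed
    define g where "g = Abs_fps (\<lambda>k. G k $ k)"
    have g0: "g $ 0 = 1" by (simp add: g_def G_def)
    have "phi f = g ^ 2"
    proof (rule fps_ext)
      fix N
      obtain n0 where n0: "\<forall>n\<ge>n0. fcong (Suc N) (P n) f"
        using conv_fcong[OF lim] by blast
      define n where "n = max n0 N"
      have Pn: "fcong (Suc N) (P n) f" using n0 by (simp add: n_def)
      have gG: "fcong (Suc N) g (G n)"
        unfolding fcong_def
      proof (intro allI impI)
        fix k assume "k < Suc N"
        then have "k \<le> n" by (simp add: n_def)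
        from stab[OF this] show "g $ k = G n $ k" by (simp add: g_def fcong_def)
      qed
      have "phi (P n) = G n ^ 2" by (simp add: phiP R1)
      then have "fcong (Suc N) (phi f) (G n ^ 2)"
        using fcong_sym[OF phi_fcong[OF Pn]] by simp
      then have "fcong (Suc N) (phi f) (g ^ 2)"
        using fcong_trans fcong_sym[OF fcong_power[OF gG, of 2]] by blast
      then show "phi f $ N = (g ^ 2) $ N" by (simp add: fcong_def)
    qed
    then show "\<exists>g. g $ 0 = 1 \<and> phi f = g ^ 2" using g0 by blast
  qed
qed

end
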